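(* Consider the single-storage problem (P1) with round-trip efficiency $\eta\in(0,1]$, i.e. with the constraint $S_t-S_{t-1}\le p_t^+$ replaced by $S_t-S_{t-1}\le\eta\,p_t^+$. With $0\le S_0\le\overline{S}$, $\overline{x}\ge 0$, the problem is feasible and, if the qualified capacity is $\overline{S}$ or $\overline{x}$, the resulting EUE (average over finitely many profiles of $\sum_tp_t^-+$ optimal value) is continuous, piecewise linear and non-increasing in the qualified capacity, so the MRI is non-negative wherever it exists.
   Context: For real $P_t$ (net capacity surplus at hour $t$), $p_t^+=\max\{P_t,0\}$, $p_t^-=\max\{-P_t,0\}$. Problem (P1): minimize $\sum_{t=1}^T\min\{0,S_t-S_{t-1}\}$ over $S_1,\dots,S_T$ subject to $0\le S_t\le\overline{S}$, $-\overline{x}\le S_t-S_{t-1}\le\overline{x}$, $-p_t^-\le S_t-S_{t-1}\le p_t^+$ for all $t$, with $S_0$ a given constant. $\mathrm{MRI}=-\partial\mathrm{EUE}/\partial\mathrm{QC}$. *)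

theory Defs
  imports "HOL-Analysis.Analysis"
begin

definition pplus :: "real \<Rightarrow> real" where "pplus p = max p 0"
definition pminus :: "real \<Rightarrow> real" where "pminus p = max (- p) 0"

definition feasible ::
  "real \<Rightarrow> real \<Rightarrow> real \<Rightarrow> real \<Rightarrow> nat \<Rightarrow> (nat \<Rightarrow> real) \<Rightarrow> (nat \<Rightarrow> real) \<Rightarrow> bool" where
  "feasible eta Sbar xbar S0 T P S \<longleftrightarrow>
     S 0 = S0 \<and>
     (\<forall>t\<in>{1..T}. 0 \<le> S t \<and> S t \<le> Sbar \<and>
        - xbar \<le> S t - S (t - 1) \<and> S t - S (t - 1) \<le> xbar \<and>
        - pminus (P t) \<le> S t - S (t - 1) \<and> S t - S (t - 1) \<le> eta * pplus (P t))"

definition objective :: "nat \<Rightarrow> (nat \<Rightarrow> real) \<Rightarrow> real" where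
  "objective T S = (\<Sum>t=1..T. min 0 (S t - S (t - 1)))"

definition optval ::
  "real \<Rightarrow> real \<Rightarrow> real \<Rightarrow> real \<Rightarrow> nat \<Rightarrow> (nat \<Rightarrow> real) \<Rightarrow> real" where
  "optval eta Sbar xbar S0 T P = Inf {objective T S | S. feasible eta Sbar xbar S0 T P S}"

definition EUE ::
  "real \<Rightarrow> real \<Rightarrow> real \<Rightarrow> real \<Rightarrow> nat \<Rightarrow> nat \<Rightarrow> (nat \<Rightarrow> nat \<Rightarrow> real) \<Rightarrow> real" where
  "EUE eta Sbar xbar S0 T K P =
     (\<Sum>k<K. (\<Sum>t=1..T. pminus (P k t)) + optval eta Sbar xbar S0 T (P k)) / real K"

definition piecewise_linear_from :: "real \<Rightarrow> (real \<Rightarrow> real) \<Rightarrow> bool" where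
  "piecewise_linear_from a f \<longleftrightarrow>
     (\<exists>B. finite B \<and> (\<forall>x y. a \<le> x \<longrightarrow> x < y \<longrightarrow> {x<..<y} \<inter> B = {} \<longrightarrow>
        (\<exists>m c. \<forall>z\<in>{x..y}. f z = m * z + c)))"

definition MRI_is :: "(real \<Rightarrow> real) \<Rightarrow> real set \<Rightarrow> real \<Rightarrow> real \<Rightarrow> bool" where
  "MRI_is f D q m \<longleftrightarrow> (\<exists>d. (f has_real_derivative d) (at q within D) \<and> m = - d)"

end

theory Submission
  imports Defs
begin


definition pla :: "(real \<Rightarrow> real) \<Rightarrow> bool" where
  "pla F \<longleftrightarrow> continuous_on UNIV F \<and> (\<exists>A. finite A \<and> (\<forall>z. \<exists>h\<in>A. F z = fst h * z + snd h))"

lemma pla_const: "pla (\<lambda>z. c)"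
  unfolding pla_def by (intro conjI continuous_intros exI[of _ "{(0,c)}"]) auto

lemma pla_id: "pla (\<lambda>z. z)"
  unfolding pla_def by (intro conjI continuous_intros exI[of _ "{(1,0)}"]) auto

lemma pla_add: assumes "pla F" "pla G" shows "pla (\<lambda>z. F z + G z)"
proof -
  from assms obtain A1 A2 where A: "finite A1" "\<forall>z. \<exists>h\<in>A1. F z = fst h * z + snd h"
    "finite A2" "\<forall>z. \<exists>h\<in>A2. G z = fst h * z + snd h" and c: "continuous_on UNIV F" "continuous_on UNIV G"
    unfolding pla_def by blast
  let ?A = "(\<lambda>(p,q). (fst p + fst q, snd p + snd q)) ` (A1 \<times> A2)"
  have "\<forall>z. \<exists>h\<in>?A. F z + G z = fst h * z + snd h"
  proof
    fix z
    obtain p q where "p \<in> A1" "F z = fst p * z + snd p" "q \<in> A2" "G z = fst q * z + snd q"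
      using A by blast
    then show "\<exists>h\<in>?A. F z + G z = fst h * z + snd h"
      by (intro bexI[of _ "(fst p + fst q, snd p + snd q)"]) (auto simp: algebra_simps)
  qed
  then show ?thesis unfolding pla_def using A c by (intro conjI continuous_intros exI[of _ ?A]) auto
qed

lemma pla_scale: assumes "pla F" shows "pla (\<lambda>z. r * F z)"
proof -
  from assms obtain A1 where A: "finite A1" "\<forall>z. \<exists>h\<in>A1. F z = fst h * z + snd h"
    and c: "continuous_on UNIV F"
    unfolding pla_def by blast
  let ?A = "(\<lambda>p. (r * fst p, r * snd p)) ` A1"
  have "\<forall>z. \<exists>h\<in>?A. r * F z = fst h * z + snd h"
  proof
    fix z
    obtain p where "p \<in> A1" "F z = fst p * z + snd p"
      using A by blast
    then show "\<exists>h\<in>?A. r * F z = fst h * z + snd h"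
      by (intro bexI[of _ "(r * fst p, r * snd p)"]) (auto simp: algebra_simps)
  qed
  then show ?thesis unfolding pla_def using A c by (intro conjI continuous_intros exI[of _ ?A]) auto
qed

lemma pla_diff: assumes "pla F" "pla G" shows "pla (\<lambda>z. F z - G z)"
  using pla_add[OF assms(1) pla_scale[OF assms(2), of "-1"]] by simp

lemma pla_div: assumes "pla F" shows "pla (\<lambda>z. F z / r)"
  using pla_scale[OF assms, of "1/r"] by simp

lemma pla_min: assumes "pla F" "pla G" shows "pla (\<lambda>z. min (F z) (G z))"
proof -
  from assms obtain A1 A2 where A: "finite A1" "\<forall>z. \<exists>h\<in>A1. F z = fst h * z + snd h"
    "finite A2" "\<forall>z. \<exists>h\<in>A2. G z = fst h * z + snd h" and c: "continuous_on UNIV F" "continuous_on UNIV G"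
    unfolding pla_def by blast
  have "\<forall>z. \<exists>h\<in>A1 \<union> A2. min (F z) (G z) = fst h * z + snd h"
    using A by (metis UnCI min_def)
  then show ?thesis unfolding pla_def using A c by (intro conjI continuous_intros exI[of _ "A1 \<union> A2"]) auto
qed

lemma pla_max: assumes "pla F" "pla G" shows "pla (\<lambda>z. max (F z) (G z))"
proof -
  from assms obtain A1 A2 where A: "finite A1" "\<forall>z. \<exists>h\<in>A1. F z = fst h * z + snd h"
    "finite A2" "\<forall>z. \<exists>h\<in>A2. G z = fst h * z + snd h" and c: "continuous_on UNIV F" "continuous_on UNIV G"
    unfolding pla_def by blast
  have "\<forall>z. \<exists>h\<in>A1 \<union> A2. max (F z) (G z) = fst h * z + snd h"
    using A by (metis UnCI max_def)
  then show ?thesis unfolding pla_def using A c by (intro conjI continuous_intros exI[of _ "A1 \<union> A2"]) auto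
qed

lemma pla_sum: assumes "finite I" "\<And>i. i \<in> I \<Longrightarrow> pla (F i)" shows "pla (\<lambda>z. \<Sum>i\<in>I. F i z)"
  using assms by (induction I rule: finite_induct) (auto intro: pla_add pla_const)

lemma pla_PL: assumes "pla F" shows "piecewise_linear_from a F"
proof -
  from assms obtain A where A: "finite A" "\<And>z. \<exists>h\<in>A. F z = fst h * z + snd h"
    and c: "continuous_on UNIV F"
    unfolding pla_def by blast
  define B where "B = {w. \<exists>p\<in>A. \<exists>q\<in>A. p \<noteq> q \<and> fst p * w + snd p = fst q * w + snd q}"
  have "B \<subseteq> (\<lambda>(p,q). (snd q - snd p) / (fst p - fst q)) ` (A \<times> A)"
  proof
    fix w assume "w \<in> B"
    then obtain p q where pq: "p \<in> A" "q \<in> A" "p \<noteq> q" "fst p * w + snd p = fst q * w + snd q"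
      unfolding B_def by blast
    have "fst p \<noteq> fst q" using pq by (metis add_left_cancel prod_eqI)
    then have "w = (snd q - snd p) / (fst p - fst q)" using pq(4)
      by (simp add: field_simps)
    then show "w \<in> (\<lambda>(p,q). (snd q - snd p) / (fst p - fst q)) ` (A \<times> A)" using pq by force
  qed
  then have fB: "finite B" using A(1) by (meson finite_SigmaI finite_imageI finite_subset)
  have "\<exists>m c. \<forall>z\<in>{x..y}. F z = m * z + c" if xy: "x < y" "{x<..<y} \<inter> B = {}" for x y
  proof -
    define S where "S = {x<..<y}"
    define mid where "mid = (x + y) / 2"
    have midS: "mid \<in> S" using xy unfolding S_def mid_def by auto
    obtain h0 where h0: "h0 \<in> A" "F mid = fst h0 * mid + snd h0" using A(2) by blast
    define E1 where "E1 = {z \<in> S. F z - (fst h0 * z + snd h0) = 0}"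
    define E2 where "E2 = \<Union>((\<lambda>h. {z \<in> S. F z - (fst h * z + snd h) = 0}) ` (A - {h0}))"
    have cS: "continuous_on S (\<lambda>z. F z - (fst h * z + snd h))" for h
      by (intro continuous_intros continuous_on_subset[OF c]) auto
    have "closedin (top_of_set S) E1" unfolding E1_def by (rule continuous_closedin_preimage_constant[OF cS])
    moreover have "closedin (top_of_set S) E2" unfolding E2_def
      apply (rule closedin_Union) using A(1) apply simp
      using continuous_closedin_preimage_constant[OF cS] by blast
    moreover have "S \<subseteq> E1 \<union> E2"
    proof
      fix z assume "z \<in> S"
      obtain h where "h \<in> A" "F z = fst h * z + snd h" using A(2) by blast
      then show "z \<in> E1 \<union> E2" using \<open>z \<in> S\<close> unfolding E1_def E2_def by (cases "h = h0") auto
    qed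
    moreover have "E1 \<inter> E2 = {}"
    proof (rule ccontr)
      assume "E1 \<inter> E2 \<noteq> {}"
      then obtain z where z: "z \<in> E1" "z \<in> E2" by blast
      then obtain h where "h \<in> A - {h0}" "z \<in> S" "F z - (fst h * z + snd h) = 0"
        unfolding E2_def by blast
      then have "z \<in> S" "h \<in> A" "h \<noteq> h0" "F z = fst h * z + snd h" "F z = fst h0 * z + snd h0"
        using z(1) unfolding E1_def by auto
      then have "fst h * z + snd h = fst h0 * z + snd h0" "h \<in> A" "h \<noteq> h0" "z \<in> S" by auto
      then have "z \<in> B" unfolding B_def using h0(1) by blast
      then show False using xy \<open>z \<in> S\<close> unfolding S_def by auto
    qed
    moreover have "E1 \<noteq> {}" using midS h0 unfolding E1_def by auto
    ultimately have "E2 = {}" using connected_closedin[of S] unfolding S_def by auto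
    then have E1S: "S \<subseteq> E1" using \<open>S \<subseteq> E1 \<union> E2\<close> by auto
    have cl: "closed {z \<in> {x..y}. F z - (fst h0 * z + snd h0) = 0}"
      by (intro continuous_closed_preimage_constant cS continuous_intros continuous_on_subset[OF c]) auto
    have "S \<subseteq> {z \<in> {x..y}. F z - (fst h0 * z + snd h0) = 0}"
      using E1S unfolding E1_def S_def by auto
    from closure_minimal[OF this cl] have "{x..y} \<subseteq> {z \<in> {x..y}. F z - (fst h0 * z + snd h0) = 0}"
      using xy unfolding S_def by simp
    then show ?thesis by (intro exI[of _ "fst h0"] exI[of _ "snd h0"]) auto
  qed
  then show ?thesis unfolding piecewise_linear_from_def using fB by blast
qed


fun grd :: "real \<Rightarrow> real \<Rightarrow> real \<Rightarrow> real \<Rightarrow> (nat \<Rightarrow> real) \<Rightarrow> nat \<Rightarrow> real" where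
  "grd eta Sb xb S0 P 0 = S0"
| "grd eta Sb xb S0 P (Suc t) = (if 0 \<le> P (Suc t)
     then min Sb (grd eta Sb xb S0 P t + min xb (eta * pplus (P (Suc t))))
     else max 0 (grd eta Sb xb S0 P t - min xb (pminus (P (Suc t)))))"

lemma pp_pos: "0 \<le> p \<Longrightarrow> pplus p = p \<and> pminus p = 0"
  unfolding pplus_def pminus_def by auto
lemma pp_neg: "p < 0 \<Longrightarrow> pplus p = 0 \<and> pminus p = - p"
  unfolding pplus_def pminus_def by auto

lemma grd_bounds:
  assumes "0 \<le> eta" "0 \<le> S0" "S0 \<le> Sb" "0 \<le> xb"
  shows "0 \<le> grd eta Sb xb S0 P t \<and> grd eta Sb xb S0 P t \<le> Sb"
proof (induction t)
  case 0 then show ?case using assms by simp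
next
  case (Suc t)
  show ?case
  proof (cases "0 \<le> P (Suc t)")
    case True
    then have "0 \<le> eta * pplus (P (Suc t))" using pp_pos assms by simp
    then show ?thesis using True Suc assms by simp
  next
    case False
    then have "0 \<le> pminus (P (Suc t))" using pp_neg by auto
    then show ?thesis using False Suc assms by (auto simp: min_def)
  qed
qed

lemma grd_feasible:
  assumes "0 \<le> eta" "0 \<le> S0" "S0 \<le> Sb" "0 \<le> xb"
  shows "feasible eta Sb xb S0 T P (grd eta Sb xb S0 P)"
  unfolding feasible_def
proof (rule conjI[OF _ ballI])
  fix t assume "t \<in> {1..T}"
  then obtain n where t: "t = Suc n" by (cases t) auto
  have b: "0 \<le> grd eta Sb xb S0 P n" "grd eta Sb xb S0 P n \<le> Sb"
    "0 \<le> grd eta Sb xb S0 P t" "grd eta Sb xb S0 P t \<le> Sb"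
    using grd_bounds[OF assms] by auto
  have "- xb \<le> grd eta Sb xb S0 P t - grd eta Sb xb S0 P (t - 1) \<and>
        grd eta Sb xb S0 P t - grd eta Sb xb S0 P (t - 1) \<le> xb \<and>
        - pminus (P t) \<le> grd eta Sb xb S0 P t - grd eta Sb xb S0 P (t - 1) \<and>
        grd eta Sb xb S0 P t - grd eta Sb xb S0 P (t - 1) \<le> eta * pplus (P t)"
  proof (cases "0 \<le> P t")
    case True
    then have "pminus (P t) = 0" "0 \<le> eta * pplus (P t)" using pp_pos assms by auto
    then show ?thesis using True b assms unfolding t by auto
  next
    case False
    then have "pplus (P t) = 0" "0 \<le> pminus (P t)" using pp_neg by auto
    then show ?thesis using False b assms unfolding t by auto
  qed
  then show "0 \<le> grd eta Sb xb S0 P t \<and> grd eta Sb xb S0 P t \<le> Sb \<and>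
        - xb \<le> grd eta Sb xb S0 P t - grd eta Sb xb S0 P (t - 1) \<and>
        grd eta Sb xb S0 P t - grd eta Sb xb S0 P (t - 1) \<le> xb \<and>
        - pminus (P t) \<le> grd eta Sb xb S0 P t - grd eta Sb xb S0 P (t - 1) \<and>
        grd eta Sb xb S0 P t - grd eta Sb xb S0 P (t - 1) \<le> eta * pplus (P t)"
    using b by auto
qed simp

lemma objective_0: "objective 0 S = 0" unfolding objective_def by simp
lemma objective_Suc: "objective (Suc n) S = objective n S + min 0 (S (Suc n) - S n)"
  unfolding objective_def by (simp add: sum.cl_ivl_Suc)

lemma grd_inv:
  assumes "0 \<le> eta" "0 \<le> S0" "S0 \<le> Sb" "0 \<le> xb"
    and F: "feasible eta Sb xb S0 T P S"
  shows "n \<le> T \<Longrightarrow> objective n (grd eta Sb xb S0 P) \<le> objective n S \<and>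
     objective n (grd eta Sb xb S0 P) - grd eta Sb xb S0 P n \<le> objective n S - S n"
proof (induction n)
  case 0 then show ?case using F unfolding feasible_def by (simp add: objective_0)
next
  case (Suc n)
  let ?G = "grd eta Sb xb S0 P"
  have IH: "objective n ?G \<le> objective n S" "objective n ?G - ?G n \<le> objective n S - S n"
    using Suc by auto
  have "Suc n \<in> {1..T}" using Suc by auto
  then have fs: "0 \<le> S (Suc n)" "S (Suc n) \<le> Sb" "- xb \<le> S (Suc n) - S n" "S (Suc n) - S n \<le> xb"
    "- pminus (P (Suc n)) \<le> S (Suc n) - S n" "S (Suc n) - S n \<le> eta * pplus (P (Suc n))"
    using conjunct2[OF F[unfolded feasible_def], rule_format, OF \<open>Suc n \<in> {1..T}\<close>] by simp_all
  have b: "0 \<le> ?G n" "?G n \<le> Sb" using grd_bounds[OF assms(1-4)] by auto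
  show ?case
  proof (cases "0 \<le> P (Suc n)")
    case True
    then have pp: "pminus (P (Suc n)) = 0" "0 \<le> eta * pplus (P (Suc n))" using pp_pos assms by auto
    have g: "?G (Suc n) = min Sb (?G n + min xb (eta * pplus (P (Suc n))))" using True by simp
    show ?thesis unfolding objective_Suc using IH fs pp g b by (auto simp: min_def)
  next
    case False
    then have pp: "pplus (P (Suc n)) = 0" "0 \<le> pminus (P (Suc n))" using pp_neg by auto
    have g: "?G (Suc n) = max 0 (?G n - min xb (pminus (P (Suc n))))" using False by simp
    show ?thesis unfolding objective_Suc using IH fs pp g b by (auto simp: min_def max_def)
  qed
qed

lemma optval_eq:
  assumes "0 \<le> eta" "0 \<le> S0" "S0 \<le> Sb" "0 \<le> xb"
  shows "optval eta Sb xb S0 T P = objective T (grd eta Sb xb S0 P)"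
  unfolding optval_def
proof (rule cInf_eq_minimum)
  show "objective T (grd eta Sb xb S0 P) \<in> {objective T S |S. feasible eta Sb xb S0 T P S}"
    using grd_feasible[OF assms] by blast
next
  fix x assume "x \<in> {objective T S |S. feasible eta Sb xb S0 T P S}"
  then show "objective T (grd eta Sb xb S0 P) \<le> x" using grd_inv[OF assms, of T] by auto
qed

lemma feasible_mono: "feasible eta Sb xb S0 T P S \<Longrightarrow> Sb \<le> Sb' \<Longrightarrow> xb \<le> xb' \<Longrightarrow>
   feasible eta Sb' xb S0 T P S \<and> feasible eta Sb xb' S0 T P S"
  unfolding feasible_def by force

lemma EUE_eq:
  assumes "0 \<le> eta" "0 \<le> S0" "S0 \<le> Sb" "0 \<le> xb"
  shows "EUE eta Sb xb S0 T K P = (\<Sum>k<K. (\<Sum>t=1..T. pminus (P k t)) + objective T (grd eta Sb xb S0 (P k))) / real K"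
  unfolding EUE_def using optval_eq[OF assms] by simp

lemma pla_grd_S: "pla (\<lambda>s. grd eta s xb S0 P t)"
proof (induction t)
  case 0 then show ?case by (simp add: pla_const)
next
  case (Suc t)
  then show ?case
    by (cases "0 \<le> P (Suc t)") (auto intro!: pla_min pla_max pla_id pla_const pla_add pla_diff)
qed

lemma pla_grd_x: "pla (\<lambda>x. grd eta Sb x S0 P t)"
proof (induction t)
  case 0 then show ?case by (simp add: pla_const)
next
  case (Suc t)
  then show ?case
    by (cases "0 \<le> P (Suc t)") (auto intro!: pla_min pla_max pla_id pla_const pla_add pla_diff)
qed

lemma pla_objective: assumes "\<And>t. pla (\<lambda>s. G s t)" shows "pla (\<lambda>s. objective T (G s))"
  unfolding objective_def by (intro pla_sum pla_min pla_const pla_diff assms) auto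

lemma PL_cong: "(\<And>z. a \<le> z \<Longrightarrow> f z = F z) \<Longrightarrow> piecewise_linear_from a F \<Longrightarrow> piecewise_linear_from a f"
  unfolding piecewise_linear_from_def
  by (metis (no_types, lifting) atLeastAtMost_iff order_trans)

lemma MRI_nonneg:
  assumes mono: "\<forall>x y. a \<le> x \<longrightarrow> x \<le> y \<longrightarrow> f y \<le> f x" and "a \<le> q" and "MRI_is f {a..} q m"
  shows "0 \<le> m"
proof -
  obtain d where d: "(f has_real_derivative d) (at q within {a..})" "m = - d"
    using assms(3) unfolding MRI_is_def by blast
  have "(f has_real_derivative d) (at q within {q<..})"
    by (rule has_field_derivative_subset[OF d(1)]) (use assms(2) in auto)
  then have lim: "((\<lambda>y. (f y - f q) / (y - q)) \<longlongrightarrow> d) (at_right q)"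
    using has_field_derivative_iff by blast
  have ev: "eventually (\<lambda>y. (f y - f q) / (y - q) \<le> 0) (at_right q)"
    unfolding eventually_at_filter
  proof (rule always_eventually, intro allI impI)
    fix y assume "y \<noteq> q" "y \<in> {q<..}"
    then have "f y \<le> f q" "y - q > 0" using mono assms(2) by auto
    then show "(f y - f q) / (y - q) \<le> 0" by (simp add: divide_nonpos_pos)
  qed
  have "d \<le> 0" using tendsto_upperbound[OF lim ev] by simp
  then show ?thesis using d(2) by simp
qed


lemma obj_mono:
  assumes "0 \<le> eta" "0 \<le> S0" "S0 \<le> Sb" "Sb \<le> Sb'" "0 \<le> xb" "xb \<le> xb'"
  shows "objective T (grd eta Sb' xb' S0 P) \<le> objective T (grd eta Sb xb S0 P)"
proof -
  have "feasible eta Sb xb S0 T P (grd eta Sb xb S0 P)" using grd_feasible assms by simp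
  then have "feasible eta Sb' xb S0 T P (grd eta Sb xb S0 P)" using feasible_mono assms by blast
  then have "feasible eta Sb' xb' S0 T P (grd eta Sb xb S0 P)" using feasible_mono assms by blast
  then show ?thesis using grd_inv[of eta S0 Sb' xb' T P "grd eta Sb xb S0 P" T] assms by simp
qed

lemma EUE_mono:
  assumes "0 \<le> eta" "0 \<le> S0" "S0 \<le> Sb" "Sb \<le> Sb'" "0 \<le> xb" "xb \<le> xb'"
  shows "EUE eta Sb' xb' S0 T K P \<le> EUE eta Sb xb S0 T K P"
proof -
  have "(\<Sum>k<K. (\<Sum>t=1..T. pminus (P k t)) + objective T (grd eta Sb' xb' S0 (P k)))
     \<le> (\<Sum>k<K. (\<Sum>t=1..T. pminus (P k t)) + objective T (grd eta Sb xb S0 (P k)))"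
    by (intro sum_mono add_left_mono obj_mono assms)
  then show ?thesis using EUE_eq[of eta S0 Sb xb] EUE_eq[of eta S0 Sb' xb'] assms
    by (simp add: divide_right_mono)
qed

theorem mainTheorem7:
  fixes eta Sbar xbar S0 :: real and T K :: nat and P :: "nat \<Rightarrow> nat \<Rightarrow> real"
  assumes "0 < eta" and "eta \<le> 1"
    and "0 \<le> S0" and "S0 \<le> Sbar" and "0 \<le> xbar" and "0 < K"
  shows "(\<forall>k<K. \<exists>S. feasible eta Sbar xbar S0 T (P k) S)
    \<and> (let f = (\<lambda>s. EUE eta s xbar S0 T K P) in
         continuous_on {S0..} f \<and> piecewise_linear_from S0 f \<and>
         (\<forall>x y. S0 \<le> x \<longrightarrow> x \<le> y \<longrightarrow> f y \<le> f x) \<and>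
         (\<forall>q m. S0 \<le> q \<longrightarrow> MRI_is f {S0..} q m \<longrightarrow> 0 \<le> m))
    \<and> (let g = (\<lambda>x. EUE eta Sbar x S0 T K P) in
         continuous_on {0..} g \<and> piecewise_linear_from 0 g \<and>
         (\<forall>x y. 0 \<le> x \<longrightarrow> x \<le> y \<longrightarrow> g y \<le> g x) \<and>
         (\<forall>q m. 0 \<le> q \<longrightarrow> MRI_is g {0..} q m \<longrightarrow> 0 \<le> m))"
proof -
  have eta0: "0 \<le> eta" using assms by simp
  define F where "F = (\<lambda>s. (\<Sum>k<K. (\<Sum>t=1..T. pminus (P k t)) + objective T (grd eta s xbar S0 (P k))) / real K)"
  define G where "G = (\<lambda>x. (\<Sum>k<K. (\<Sum>t=1..T. pminus (P k t)) + objective T (grd eta Sbar x S0 (P k))) / real K)"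
  have plaF: "pla F" unfolding F_def
    by (intro pla_div pla_sum pla_add pla_const pla_objective pla_grd_S) auto
  have plaG: "pla G" unfolding G_def
    by (intro pla_div pla_sum pla_add pla_const pla_objective pla_grd_x) auto
  have Feq: "EUE eta s xbar S0 T K P = F s" if "S0 \<le> s" for s
    unfolding F_def using EUE_eq[of eta S0 s xbar] that assms by simp
  have Geq: "EUE eta Sbar x S0 T K P = G x" if "0 \<le> x" for x
    unfolding G_def using EUE_eq[of eta S0 Sbar x] that assms by simp
  have P1: "\<forall>k<K. \<exists>S. feasible eta Sbar xbar S0 T (P k) S"
    using grd_feasible[OF eta0 assms(3,4,5)] by blast
  have cF: "continuous_on {S0..} F" using plaF unfolding pla_def by (auto intro: continuous_on_subset)
  have cG: "continuous_on {0..} G" using plaG unfolding pla_def by (auto intro: continuous_on_subset)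
  have monoF: "\<forall>x y. S0 \<le> x \<longrightarrow> x \<le> y \<longrightarrow> EUE eta y xbar S0 T K P \<le> EUE eta x xbar S0 T K P"
    using EUE_mono[OF eta0 assms(3) _ _ assms(5) order_refl] by blast
  have monoG: "\<forall>x y. 0 \<le> x \<longrightarrow> x \<le> y \<longrightarrow> EUE eta Sbar y S0 T K P \<le> EUE eta Sbar x S0 T K P"
    using EUE_mono[OF eta0 assms(3,4) order_refl] by blast
  have P2: "let f = (\<lambda>s. EUE eta s xbar S0 T K P) in
         continuous_on {S0..} f \<and> piecewise_linear_from S0 f \<and>
         (\<forall>x y. S0 \<le> x \<longrightarrow> x \<le> y \<longrightarrow> f y \<le> f x) \<and>
         (\<forall>q m. S0 \<le> q \<longrightarrow> MRI_is f {S0..} q m \<longrightarrow> 0 \<le> m)"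
    unfolding Let_def
  proof (intro conjI allI impI)
    show "continuous_on {S0..} (\<lambda>s. EUE eta s xbar S0 T K P)"
      using continuous_on_cong[of "{S0..}" "{S0..}" "\<lambda>s. EUE eta s xbar S0 T K P" F] cF Feq by auto
    show "piecewise_linear_from S0 (\<lambda>s. EUE eta s xbar S0 T K P)"
      by (rule PL_cong[OF _ pla_PL[OF plaF]]) (simp add: Feq)
    show "\<And>x y. S0 \<le> x \<Longrightarrow> x \<le> y \<Longrightarrow> EUE eta y xbar S0 T K P \<le> EUE eta x xbar S0 T K P"
      using monoF by blast
    show "\<And>q m. S0 \<le> q \<Longrightarrow> MRI_is (\<lambda>s. EUE eta s xbar S0 T K P) {S0..} q m \<Longrightarrow> 0 \<le> m"
      by (rule MRI_nonneg[of S0]) (use monoF in auto)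
  qed
  have P3: "let g = (\<lambda>x. EUE eta Sbar x S0 T K P) in
         continuous_on {0..} g \<and> piecewise_linear_from 0 g \<and>
         (\<forall>x y. 0 \<le> x \<longrightarrow> x \<le> y \<longrightarrow> g y \<le> g x) \<and>
         (\<forall>q m. 0 \<le> q \<longrightarrow> MRI_is g {0..} q m \<longrightarrow> 0 \<le> m)"
    unfolding Let_def
  proof (intro conjI allI impI)
    show "continuous_on {0..} (\<lambda>x. EUE eta Sbar x S0 T K P)"
      using continuous_on_cong[of "{0..}" "{0..}" "\<lambda>x. EUE eta Sbar x S0 T K P" G] cG Geq by auto
    show "piecewise_linear_from 0 (\<lambda>x. EUE eta Sbar x S0 T K P)"
      by (rule PL_cong[OF _ pla_PL[OF plaG]]) (simp add: Geq)
    show "\<And>x y. 0 \<le> x \<Longrightarrow> x \<le> y \<Longrightarrow> EUE eta Sbar y S0 T K P \<le> EUE eta Sbar x S0 T K P"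
      using monoG by blast
    show "\<And>q m. 0 \<le> q \<Longrightarrow> MRI_is (\<lambda>x. EUE eta Sbar x S0 T K P) {0..} q m \<Longrightarrow> 0 \<le> m"
      by (rule MRI_nonneg[of 0]) (use monoG in auto)
  qed
  show ?thesis using P1 P2 P3 by blast
qed

end
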